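(* Let $A$ be a ring satisfying the ascending chain condition on semiprime ideals, and let $\varphi: A \to A$ be a surjective ring endomorphism. Then $\ker\varphi$ is contained in the prime radical of $A$.
   Context: The prime radical of $A$ is the intersection of all prime ideals of $A$. For an ideal $J \triangleleft A$, $\sqrt{J}$ is the intersection of the prime ideals containing $J$; $J$ is \emph{semiprime} if $\sqrt J = J$. *)

theory Defs
  imports Main
begin

text \<open>Rings are associative, unital, not necessarily commutative (type class ring_1);
  the ring A is the whole type.\<close>

definition two_sided_ideal :: "'a::ring_1 set \<Rightarrow> bool" where
  "two_sided_ideal I \<longleftrightarrow> 0 \<in> I \<and> (\<forall>x\<in>I. \<forall>y\<in>I. x + y \<in> I) \<and> (\<forall>x\<in>I. - x \<in> I)
     \<and> (\<forall>x\<in>I. \<forall>r. r * x \<in> I \<and> x * r \<in> I)"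

text \<open>Since P is closed under sums, IJ \<subseteq> P iff all
  products a*b with a in I, b in J lie in P.\<close>
definition prime_ideal :: "'a::ring_1 set \<Rightarrow> bool" where
  "prime_ideal P \<longleftrightarrow> two_sided_ideal P \<and> P \<noteq> UNIV \<and>
     (\<forall>I J. two_sided_ideal I \<longrightarrow> two_sided_ideal J \<longrightarrow>
        (\<forall>a\<in>I. \<forall>b\<in>J. a * b \<in> P) \<longrightarrow> I \<subseteq> P \<or> J \<subseteq> P)"

definition prime_radical :: "'a::ring_1 set" where
  "prime_radical = \<Inter> {P. prime_ideal P}"

definition ideal_radical :: "'a::ring_1 set \<Rightarrow> 'a set" where
  "ideal_radical J = \<Inter> {P. prime_ideal P \<and> J \<subseteq> P}"

definition semiprime_ideal :: "'a::ring_1 set \<Rightarrow> bool" where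
  "semiprime_ideal J \<longleftrightarrow> two_sided_ideal J \<and> ideal_radical J = J"

definition acc_semiprime :: "'a::ring_1 itself \<Rightarrow> bool" where
  "acc_semiprime _ \<longleftrightarrow> (\<forall>f :: nat \<Rightarrow> 'a set.
     (\<forall>n. semiprime_ideal (f n)) \<longrightarrow> (\<forall>n. f n \<subseteq> f (Suc n)) \<longrightarrow>
     (\<exists>N. \<forall>n\<ge>N. f n = f N))"

end

theory Submission
  imports Defs
begin

locale shom =
  fixes \<psi> :: "'a::ring_1 \<Rightarrow> 'a"
  assumes add: "\<And>x y. \<psi> (x + y) = \<psi> x + \<psi> y"
    and mult: "\<And>x y. \<psi> (x * y) = \<psi> x * \<psi> y"
    and one: "\<psi> 1 = 1"
    and sur: "surj \<psi>"
begin

lemma zero: "\<psi> 0 = 0"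
  using add[of 0 0] by simp

lemma neg: "\<psi> (- x) = - \<psi> x"
proof -
  have "\<psi> x + \<psi> (-x) = 0" using add[of x "-x"] zero by simp
  from minus_unique[OF this] show ?thesis by simp
qed

lemma preimage_prime:
  assumes P: "prime_ideal P"
  shows "prime_ideal (\<psi> -` P)"
proof -
  have iP: "two_sided_ideal P" and nP: "P \<noteq> UNIV"
    and pP: "\<And>I J. two_sided_ideal I \<Longrightarrow> two_sided_ideal J \<Longrightarrow>
        (\<forall>a\<in>I. \<forall>b\<in>J. a * b \<in> P) \<Longrightarrow> I \<subseteq> P \<or> J \<subseteq> P"
    using P unfolding prime_ideal_def by blast+
  have ideal: "two_sided_ideal (\<psi> -` P)"
    using iP unfolding two_sided_ideal_def by (simp add: zero add neg mult)
  have "1 \<notin> P"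
  proof
    assume "1 \<in> P"
    moreover have "\<forall>x\<in>P. \<forall>r. r * x \<in> P" using iP unfolding two_sided_ideal_def by simp
    ultimately have "\<forall>r. r \<in> P" by (metis mult_1_right)
    then show False using nP by blast
  qed
  then have "1 \<notin> \<psi> -` P" using one by simp
  then have nprop: "\<psi> -` P \<noteq> UNIV" by blast
  have img: "two_sided_ideal (\<psi> ` I)" if "two_sided_ideal I" for I
  proof -
    have "\<forall>x\<in>I. \<forall>r. r * \<psi> x \<in> \<psi> ` I \<and> \<psi> x * r \<in> \<psi> ` I"
    proof (intro ballI allI)
      fix x r assume x: "x \<in> I"
      obtain s where s: "r = \<psi> s" using sur by (metis surjD)
      show "r * \<psi> x \<in> \<psi> ` I \<and> \<psi> x * r \<in> \<psi> ` I"
        using that x unfolding two_sided_ideal_def s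
        by (metis image_eqI mult)
    qed
    moreover have "\<forall>x\<in>\<psi> ` I. \<forall>y\<in>\<psi> ` I. x + y \<in> \<psi> ` I"
      using that unfolding two_sided_ideal_def by (auto simp: add[symmetric])
    moreover have "\<forall>x\<in>\<psi> ` I. - x \<in> \<psi> ` I"
      using that unfolding two_sided_ideal_def by (auto simp: neg[symmetric])
    moreover have "0 \<in> \<psi> ` I"
      using that unfolding two_sided_ideal_def by (metis zero image_eqI)
    ultimately show ?thesis unfolding two_sided_ideal_def by blast
  qed
  have "\<forall>I J. two_sided_ideal I \<longrightarrow> two_sided_ideal J \<longrightarrow>
        (\<forall>a\<in>I. \<forall>b\<in>J. a * b \<in> \<psi> -` P) \<longrightarrow> I \<subseteq> \<psi> -` P \<or> J \<subseteq> \<psi> -` P"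
  proof (intro allI impI)
    fix I J :: "'a set"
    assume I: "two_sided_ideal I" and J: "two_sided_ideal J"
      and pr: "\<forall>a\<in>I. \<forall>b\<in>J. a * b \<in> \<psi> -` P"
    have "\<forall>a\<in>\<psi> ` I. \<forall>b\<in>\<psi> ` J. a * b \<in> P" using pr by (auto simp: mult[symmetric])
    then have "\<psi> ` I \<subseteq> P \<or> \<psi> ` J \<subseteq> P" using pP img I J by blast
    then show "I \<subseteq> \<psi> -` P \<or> J \<subseteq> \<psi> -` P" by auto
  qed
  then show ?thesis unfolding prime_ideal_def using ideal nprop by blast
qed

lemma preimage_radical: "\<psi> -` prime_radical = \<Inter> {\<psi> -` P | P. prime_ideal P}"
  unfolding prime_radical_def by auto

lemma image_radical: "\<psi> ` prime_radical \<subseteq> (prime_radical :: 'a set)"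
proof
  fix y assume "y \<in> \<psi> ` prime_radical"
  then obtain x where x: "x \<in> prime_radical" "y = \<psi> x" by auto
  show "y \<in> prime_radical" unfolding prime_radical_def
  proof
    fix P :: "'a set" assume "P \<in> {P. prime_ideal P}"
    then have "prime_ideal (\<psi> -` P)" using preimage_prime by auto
    then have "x \<in> \<psi> -` P" using x(1) unfolding prime_radical_def by blast
    then show "y \<in> P" using x by simp
  qed
qed

end

lemma inter_primes_semiprime:
  fixes F :: "'a::ring_1 set set"
  assumes "\<forall>P\<in>F. prime_ideal P"
  shows "semiprime_ideal (\<Inter> F)"
proof -
  have "two_sided_ideal (\<Inter> F)"
  proof -
    have "\<forall>P\<in>F. two_sided_ideal P" using assms unfolding prime_ideal_def by simp
    then show ?thesis by (auto simp: two_sided_ideal_def)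
  qed
  moreover have "ideal_radical (\<Inter> F) = \<Inter> F"
    unfolding ideal_radical_def using assms by blast
  ultimately show ?thesis unfolding semiprime_ideal_def by blast
qed

lemma shom_pow:
  assumes "shom \<phi>"
  shows "shom (\<phi> ^^ n)"
proof (induction n)
  case 0 then show ?case by (unfold_locales) auto
next
  case (Suc n)
  interpret a: shom \<phi> by fact
  interpret b: shom "\<phi>^^n" by fact
  show ?case
  proof
    have "surj (\<phi> \<circ> \<phi> ^^ n)" using a.sur b.sur by (rule comp_surj[rotated])
      then show "surj (\<phi> ^^ Suc n)" by simp
  qed (simp_all add: a.add b.add a.mult b.mult a.one b.one)
qed

theorem mainTheorem10:
  fixes \<phi> :: "'a::ring_1 \<Rightarrow> 'a"
  assumes "acc_semiprime TYPE('a)"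
    and "\<And>x y. \<phi> (x + y) = \<phi> x + \<phi> y"
    and "\<And>x y. \<phi> (x * y) = \<phi> x * \<phi> y"
    and "\<phi> 1 = 1"
    and "surj \<phi>"
  shows "{x. \<phi> x = 0} \<subseteq> prime_radical"
proof
  have h: "shom \<phi>" using assms by unfold_locales
  interpret shom \<phi> by (rule h)
  define f where "f n = (\<phi>^^n) -` (prime_radical :: 'a set)" for n
  have sp: "\<forall>n. semiprime_ideal (f n)"
  proof
    fix n
    interpret p: shom "\<phi>^^n" using shom_pow[OF h] .
    show "semiprime_ideal (f n)" unfolding f_def p.preimage_radical
      by (rule inter_primes_semiprime) (auto intro: p.preimage_prime)
  qed
  have mono: "\<forall>n. f n \<subseteq> f (Suc n)"
    using image_radical unfolding f_def by auto
  obtain N where N: "\<forall>n\<ge>N. f n = f N"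
    using assms(1) sp mono unfolding acc_semiprime_def by blast
  fix x assume "x \<in> {x. \<phi> x = 0}"
  then have x0: "\<phi> x = 0" by simp
  interpret p: shom "\<phi>^^N" using shom_pow[OF h] .
  obtain y where y: "x = (\<phi>^^N) y" using p.sur by (metis surjD)
  have "(\<phi>^^Suc N) y = 0" using x0 y by simp
  moreover have "(0::'a) \<in> prime_radical"
    by (simp add: prime_radical_def prime_ideal_def two_sided_ideal_def)
  ultimately have "y \<in> f (Suc N)" unfolding f_def by simp
  then have "y \<in> f N" using N by (metis le_SucI order_refl)
  then show "x \<in> prime_radical" using y unfolding f_def by simp
qed

end
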